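(* Let $n\ge 3$ and $a\ge 1$ be integers. (i) Every power of a cycle $C_n^a$ is a TRVG. (ii) $D_n^1$ is a TRVG. (iii) If $a\ge 3$ and $n\ge 2a+8$, then $D_n^a$ is not a TRVG. (iv) If $a\ge 2$ and $n\le 2a+4$, then $D_n^a$ is a TRVG.
   Context: A graph $G$ is a transparent rectangle visibility graph (TRVG) if its vertices can be represented by a collection of pairwise non-overlapping rectangles in the plane whose sides are parallel to the coordinate axes, one per vertex, such that two distinct vertices are adjacent if and only if there is a horizontal or a vertical line intersecting the interiors of both of their rectangles (other rectangles do not block visibility). For integers $n\ge 3$, $a\ge 1$, the $a$-th power of the cycle, $C_n^a$, has vertices $v_1,\dots,v_n$, with $v_i$ and $v_j$ ($i\ne j$) adjacent iff their cyclic distance $\min(|i-j|,\,n-|i-j|)$ is at most $a$. $D_n^a$ denotes the complement of $C_n^a$. *)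

theory Defs
  imports Complex_Main
begin

definition ivl_overlap :: "real \<Rightarrow> real \<Rightarrow> real \<Rightarrow> real \<Rightarrow> bool" where
  "ivl_overlap a1 a2 b1 b2 \<longleftrightarrow> a1 < b2 \<and> b1 < a2"

text \<open>A graph with vertex set V and adjacency relation E is a transparent rectangle
  visibility graph if there are axis-parallel rectangles
  [x1 v, x2 v] x [y1 v, y2 v] (nondegenerate), one per vertex, with pairwise disjoint
  interiors, such that distinct vertices u, v are adjacent iff some horizontal line
  (y-projections of interiors overlap) or some vertical line (x-projections of interiors
  overlap) meets the interiors of both rectangles.\<close>
definition TRVG :: "'v set \<Rightarrow> ('v \<Rightarrow> 'v \<Rightarrow> bool) \<Rightarrow> bool" where
  "TRVG V E \<longleftrightarrow> (\<exists>x1 x2 y1 y2 :: 'v \<Rightarrow> real.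
     (\<forall>v\<in>V. x1 v < x2 v \<and> y1 v < y2 v) \<and>
     (\<forall>u\<in>V. \<forall>v\<in>V. u \<noteq> v \<longrightarrow>
        \<not> (ivl_overlap (x1 u) (x2 u) (x1 v) (x2 v) \<and> ivl_overlap (y1 u) (y2 u) (y1 v) (y2 v))) \<and>
     (\<forall>u\<in>V. \<forall>v\<in>V. u \<noteq> v \<longrightarrow>
        (E u v \<longleftrightarrow> ivl_overlap (x1 u) (x2 u) (x1 v) (x2 v) \<or> ivl_overlap (y1 u) (y2 u) (y1 v) (y2 v))))"

text \<open>Cyclic distance on vertices 0..n-1 (vertex v_i is represented by i-1).\<close>
definition cyc_dist :: "nat \<Rightarrow> nat \<Rightarrow> nat \<Rightarrow> nat" where
  "cyc_dist n i j = (let d = (if i \<le> j then j - i else i - j) in min d (n - d))"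

definition cycle_power :: "nat \<Rightarrow> nat \<Rightarrow> nat \<Rightarrow> nat \<Rightarrow> bool" where
  "cycle_power n a i j \<longleftrightarrow> i \<noteq> j \<and> cyc_dist n i j \<le> a"

definition cycle_power_compl :: "nat \<Rightarrow> nat \<Rightarrow> nat \<Rightarrow> nat \<Rightarrow> bool" where
  "cycle_power_compl n a i j \<longleftrightarrow> i \<noteq> j \<and> \<not> cycle_power n a i j"

end

theory Submission
  imports Defs
begin

lemma TRVG_intI:
  fixes XA XB YA YB :: "nat \<Rightarrow> int" and E :: "nat \<Rightarrow> nat \<Rightarrow> bool"
  assumes nd: "\<And>v. v < n \<Longrightarrow> XA v < XB v \<and> YA v < YB v"
  and pr: "\<And>u v. u < v \<Longrightarrow> v < n \<Longrightarrow>
     \<not>((XA u < XB v \<and> XA v < XB u) \<and> (YA u < YB v \<and> YA v < YB u)) \<and>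
     (E u v \<longleftrightarrow> (XA u < XB v \<and> XA v < XB u) \<or> (YA u < YB v \<and> YA v < YB u))"
  and sym: "\<And>u v. E u v \<longleftrightarrow> E v u"
  shows "TRVG {..<n} E"
proof -
  define ox where "ox u v \<longleftrightarrow> (XA u < XB v \<and> XA v < XB u)" for u v
  define oy where "oy u v \<longleftrightarrow> (YA u < YB v \<and> YA v < YB u)" for u v
  have oxs: "ox u v = ox v u" for u v unfolding ox_def by auto
  have oys: "oy u v = oy v u" for u v unfolding oy_def by auto
  have pr': "\<not> (ox u v \<and> oy u v) \<and> (E u v \<longleftrightarrow> ox u v \<or> oy u v)" if "u < n" "v < n" "u \<noteq> v" for u v
  proof (cases "u < v")
    case True then show ?thesis using pr[of u v] that unfolding ox_def oy_def by blast
  next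
    case False then have "v < u" using that by auto
    then have "\<not> (ox v u \<and> oy v u) \<and> (E v u \<longleftrightarrow> ox v u \<or> oy v u)"
      using pr[of v u] that unfolding ox_def oy_def by blast
    then show ?thesis using oxs[of u v] oys[of u v] sym[of u v] by simp
  qed
  have ivx: "ivl_overlap (real_of_int (XA u)) (real_of_int (XB u)) (real_of_int (XA v)) (real_of_int (XB v)) = ox u v" for u v
    unfolding ivl_overlap_def ox_def by simp
  have ivy: "ivl_overlap (real_of_int (YA u)) (real_of_int (YB u)) (real_of_int (YA v)) (real_of_int (YB v)) = oy u v" for u v
    unfolding ivl_overlap_def oy_def by simp
  show ?thesis unfolding TRVG_def
    apply (rule exI[of _ "\<lambda>v. real_of_int (XA v)"])
    apply (rule exI[of _ "\<lambda>v. real_of_int (XB v)"])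
    apply (rule exI[of _ "\<lambda>v. real_of_int (YA v)"])
    apply (rule exI[of _ "\<lambda>v. real_of_int (YB v)"])
    unfolding ivx ivy using nd pr' by auto
qed

lemma cyc_dist_lt: "u < v \<Longrightarrow> cyc_dist n u v = min (v - u) (n - (v - u))"
  by (simp add: cyc_dist_def Let_def)

lemma cyc_dist_sym: "cyc_dist n u v = cyc_dist n v u"
  by (simp add: cyc_dist_def Let_def)

lemma cp_sym: "cycle_power n a u v \<longleftrightarrow> cycle_power n a v u"
  unfolding cycle_power_def using cyc_dist_sym by metis

lemma cpc_sym: "cycle_power_compl n a u v \<longleftrightarrow> cycle_power_compl n a v u"
  unfolding cycle_power_compl_def using cp_sym by metis

lemma cp_lt: "u < v \<Longrightarrow> cycle_power n a u v \<longleftrightarrow> (v - u \<le> a \<or> n - (v - u) \<le> a)"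
  unfolding cycle_power_def by (auto simp: cyc_dist_lt)

lemma cpc_lt: "u < v \<Longrightarrow> cycle_power_compl n a u v \<longleftrightarrow> (a < v - u \<and> a < n - (v - u))"
  unfolding cycle_power_compl_def using cp_lt[of u v n a] by auto

lemma overlap_pairs_card:
  fixes lo hi :: "'a \<Rightarrow> real"
  assumes finL: "finite L" and finR: "finite R" and disj: "L \<inter> R = {}" and ne: "L \<noteq> {}"
  and dL: "\<And>l l'. l \<in> L \<Longrightarrow> l' \<in> L \<Longrightarrow> l \<noteq> l' \<Longrightarrow> \<not> ivl_overlap (lo l) (hi l) (lo l') (hi l')"
  and dR: "\<And>l l'. l \<in> R \<Longrightarrow> l' \<in> R \<Longrightarrow> l \<noteq> l' \<Longrightarrow> \<not> ivl_overlap (lo l) (hi l) (lo l') (hi l')"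
  shows "card {p \<in> L \<times> R. ivl_overlap (lo (fst p)) (hi (fst p)) (lo (snd p)) (hi (snd p))} < card L + card R"
proof -
  define P where "P = {p \<in> L \<times> R. ivl_overlap (lo (fst p)) (hi (fst p)) (lo (snd p)) (hi (snd p))}"
  define f where "f p = (if lo (snd p) \<le> lo (fst p) then fst p else snd p)" for p
  have inj: "inj_on f P"
  proof (rule inj_onI)
    fix p q assume p: "p \<in> P" and q: "q \<in> P" and fpq: "f p = f q"
    obtain l r where pe: "p = (l, r)" by (cases p)
    obtain l' r' where qe: "q = (l', r')" by (cases q)
    have lr: "l \<in> L" "r \<in> R" "lo l < hi r" "lo r < hi l" using p pe unfolding P_def ivl_overlap_def by auto
    have lr': "l' \<in> L" "r' \<in> R" "lo l' < hi r'" "lo r' < hi l'" using q qe unfolding P_def ivl_overlap_def by auto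
    show "p = q"
    proof (cases "lo r \<le> lo l")
      case c1: True
      show ?thesis
      proof (cases "lo r' \<le> lo l'")
        case True
        then have "l = l'" using fpq c1 pe qe f_def by auto
        moreover have "r = r'"
        proof (rule ccontr)
          assume "r \<noteq> r'"
          then show False using dR[of r r'] lr lr' c1 True \<open>l = l'\<close> unfolding ivl_overlap_def by auto
        qed
        ultimately show ?thesis using pe qe by auto
      next
        case False
        then have "l = r'" using fpq c1 pe qe f_def by auto
        then show ?thesis using disj lr lr' by auto
      qed
    next
      case c1: False
      show ?thesis
      proof (cases "lo r' \<le> lo l'")
        case True
        then have "r = l'" using fpq c1 pe qe f_def by auto
        then show ?thesis using disj lr lr' by auto
      next
        case False
        then have "r = r'" using fpq c1 pe qe f_def by auto
        moreover have "l = l'"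
        proof (rule ccontr)
          assume "l \<noteq> l'"
          then show False using dL[of l l'] lr lr' c1 False \<open>r = r'\<close> unfolding ivl_overlap_def by auto
        qed
        ultimately show ?thesis using pe qe by auto
      qed
    qed
  qed
  have sub: "f ` P \<subseteq> L \<union> R" unfolding P_def f_def by auto
  have miss: "\<exists>w \<in> L \<union> R. w \<notin> f ` P"
  proof -
    define m where "m = Min (lo ` (L \<union> R))"
    have fin: "finite (lo ` (L \<union> R))" using finL finR by auto
    have mle: "\<And>w. w \<in> L \<union> R \<Longrightarrow> m \<le> lo w" unfolding m_def using fin by auto
    have "m \<in> lo ` (L \<union> R)" unfolding m_def using fin ne by (intro Min_in) auto
    then obtain w0 where w0: "w0 \<in> L \<union> R" "lo w0 = m" by auto
    show ?thesis
    proof (cases "\<exists>r \<in> R. lo r = m")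
      case True
      then obtain r where r: "r \<in> R" "lo r = m" by auto
      have "r \<notin> f ` P"
      proof
        assume "r \<in> f ` P"
        then obtain l r' where lr: "(l, r') \<in> P" "r = f (l, r')" by auto
        have "l \<in> L" "r' \<in> R" using lr unfolding P_def by auto
        show False
        proof (cases "lo r' \<le> lo l")
          case True then have "r = l" using lr f_def by auto
          then show False using disj r \<open>l \<in> L\<close> by auto
        next
          case False then have "r = r'" using lr f_def by auto
          then show False using False mle[of l] r \<open>l \<in> L\<close> by auto
        qed
      qed
      then show ?thesis using r by auto
    next
      case False
      then have "w0 \<in> L" using w0 by auto
      have "w0 \<notin> f ` P"
      proof
        assume "w0 \<in> f ` P"
        then obtain l r' where lr: "(l, r') \<in> P" "w0 = f (l, r')" by auto
        have "l \<in> L" "r' \<in> R" using lr unfolding P_def by auto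
        show False
        proof (cases "lo r' \<le> lo l")
          case True then have "w0 = l" using lr f_def by auto
          then have "lo r' = m" using True w0 mle[of r'] \<open>r' \<in> R\<close> by auto
          then show False using False \<open>r' \<in> R\<close> by auto
        next
          case c: False then have "w0 = r'" using lr f_def by auto
          then show False using disj \<open>w0 \<in> L\<close> \<open>r' \<in> R\<close> by auto
        qed
      qed
      then show ?thesis using \<open>w0 \<in> L\<close> by auto
    qed
  qed
  have "card P = card (f ` P)" using inj by (simp add: card_image)
  also have "\<dots> < card (L \<union> R)"
    using sub miss finL finR by (intro psubset_card_mono) auto
  also have "\<dots> = card L + card R" using disj finL finR by (simp add: card_Un_disjoint)
  finally show ?thesis unfolding P_def .
qed


lemma part3:
  fixes n a :: nat
  assumes a3: "a \<ge> 3" and na: "n \<ge> 2 * a + 8"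
  shows "\<not> TRVG {..<n} (cycle_power_compl n a)"
proof
  assume "TRVG {..<n} (cycle_power_compl n a)"
  then obtain x1 x2 y1 y2 :: "nat \<Rightarrow> real" where
    H3: "\<forall>u\<in>{..<n}. \<forall>v\<in>{..<n}. u \<noteq> v \<longrightarrow>
        (cycle_power_compl n a u v \<longleftrightarrow> ivl_overlap (x1 u) (x2 u) (x1 v) (x2 v) \<or> ivl_overlap (y1 u) (y2 u) (y1 v) (y2 v))"
    unfolding TRVG_def by blast
  define L where "L = {0,1,2,3::nat}"
  define R where "R = {a+4, a+5, a+6, a+7}"
  have Ln: "l \<in> L \<Longrightarrow> l < n" for l using a3 na unfolding L_def by auto
  have Rn: "r \<in> R \<Longrightarrow> r < n" for r using a3 na unfolding R_def by auto
  have disj: "L \<inter> R = {}" unfolding L_def R_def by auto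
  have cL: "card L = 4" unfolding L_def by simp
  have cR: "card R = 4" unfolding R_def by simp
  have finL: "finite L" unfolding L_def by simp
  have finR: "finite R" unfolding R_def by simp
  have closeL: "\<not> cycle_power_compl n a l l'" if "l \<in> L" "l' \<in> L" for l l'
  proof (cases "l < l'")
    case True then show ?thesis using that a3 unfolding L_def by (auto simp: cpc_lt)
  next
    case False
    show ?thesis
    proof (cases "l' < l")
      case True then show ?thesis using that a3 unfolding L_def by (subst cpc_sym) (auto simp: cpc_lt)
    next
      case False then have "l = l'" using \<open>\<not> l < l'\<close> by auto
      then show ?thesis unfolding cycle_power_compl_def by simp
    qed
  qed
  have closeR: "\<not> cycle_power_compl n a l l'" if "l \<in> R" "l' \<in> R" for l l'
  proof (cases "l < l'")
    case True then show ?thesis using that a3 unfolding R_def by (auto simp: cpc_lt)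
  next
    case False
    show ?thesis
    proof (cases "l' < l")
      case True then show ?thesis using that a3 unfolding R_def by (subst cpc_sym) (auto simp: cpc_lt)
    next
      case False then have "l = l'" using \<open>\<not> l < l'\<close> by auto
      then show ?thesis unfolding cycle_power_compl_def by simp
    qed
  qed
  have far: "cycle_power_compl n a l r" if "l \<in> L" "r \<in> R" for l r
  proof -
    have "l \<le> 3" "a + 4 \<le> r" "r \<le> a + 7" using that unfolding L_def R_def by auto
    then show ?thesis using na by (subst cpc_lt) auto
  qed
  have dLx: "\<not> ivl_overlap (x1 l) (x2 l) (x1 l') (x2 l')" and dLy: "\<not> ivl_overlap (y1 l) (y2 l) (y1 l') (y2 l')"
    if "l \<in> L" "l' \<in> L" "l \<noteq> l'" for l l'
    using H3 closeL[OF that(1,2)] Ln[OF that(1)] Ln[OF that(2)] that(3) by auto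
  have dRx: "\<not> ivl_overlap (x1 l) (x2 l) (x1 l') (x2 l')" and dRy: "\<not> ivl_overlap (y1 l) (y2 l) (y1 l') (y2 l')"
    if "l \<in> R" "l' \<in> R" "l \<noteq> l'" for l l'
    using H3 closeR[OF that(1,2)] Rn[OF that(1)] Rn[OF that(2)] that(3) by auto
  define PX where "PX = {p \<in> L \<times> R. ivl_overlap (x1 (fst p)) (x2 (fst p)) (x1 (snd p)) (x2 (snd p))}"
  define PY where "PY = {p \<in> L \<times> R. ivl_overlap (y1 (fst p)) (y2 (fst p)) (y1 (snd p)) (y2 (snd p))}"
  have neL: "L \<noteq> {}" unfolding L_def by simp
  have cX: "card PX < 8" using overlap_pairs_card[OF finL finR disj neL, of x1 x2] dLx dRx cL cR
    unfolding PX_def by auto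
  have cY: "card PY < 8" using overlap_pairs_card[OF finL finR disj neL, of y1 y2] dLy dRy cL cR
    unfolding PY_def by auto
  have sub: "L \<times> R \<subseteq> PX \<union> PY"
  proof
    fix p assume p: "p \<in> L \<times> R"
    then obtain l r where pe: "p = (l, r)" "l \<in> L" "r \<in> R" by auto
    have "l \<noteq> r" using disj pe by auto
    then have "ivl_overlap (x1 l) (x2 l) (x1 r) (x2 r) \<or> ivl_overlap (y1 l) (y2 l) (y1 r) (y2 r)"
      using H3 far[OF pe(2,3)] Ln[OF pe(2)] Rn[OF pe(3)] by auto
    then show "p \<in> PX \<union> PY" unfolding PX_def PY_def using pe by auto
  qed
  have finP: "finite (PX \<union> PY)" unfolding PX_def PY_def using finL finR by auto
  have "16 = card (L \<times> R)" using cL cR by (simp add: card_cartesian_product)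
  also have "\<dots> \<le> card (PX \<union> PY)" using sub finP by (rule card_mono[rotated])
  also have "\<dots> \<le> card PX + card PY" by (rule card_Un_le)
  finally show False using cX cY by simp
qed

definition ci_x1 :: "nat \<Rightarrow> nat \<Rightarrow> nat \<Rightarrow> int" where
  "ci_x1 n a i = (if n \<le> 2*a then 0 else int i)"
definition ci_x2 :: "nat \<Rightarrow> nat \<Rightarrow> nat \<Rightarrow> int" where
  "ci_x2 n a i = (if n \<le> 2*a then 1 else if i < a then int i + int a + 1 else int i + 1)"
definition ci_y1 :: "nat \<Rightarrow> nat \<Rightarrow> nat \<Rightarrow> int" where
  "ci_y1 n a i = (if n \<le> 2*a then int i else if i < a then int n + int i else int i)"
definition ci_y2 :: "nat \<Rightarrow> nat \<Rightarrow> nat \<Rightarrow> int" where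
  "ci_y2 n a i = (if n \<le> 2*a then int i + 1 else if i < a then int n + int i + 1 else int i + int a + 1)"

lemma part1: "TRVG {..<n} (cycle_power n a)"
proof (rule TRVG_intI[where XA = "ci_x1 n a" and XB = "ci_x2 n a" and YA = "ci_y1 n a" and YB = "ci_y2 n a"])
  fix v show "ci_x1 n a v < ci_x2 n a v \<and> ci_y1 n a v < ci_y2 n a v"
    unfolding ci_x1_def ci_x2_def ci_y1_def ci_y2_def by auto
next
  fix u v show "cycle_power n a u v = cycle_power n a v u" by (rule cp_sym)
next
  fix u v assume uv: "u < v" "v < n"
  show "\<not> ((ci_x1 n a u < ci_x2 n a v \<and> ci_x1 n a v < ci_x2 n a u) \<and>
          (ci_y1 n a u < ci_y2 n a v \<and> ci_y1 n a v < ci_y2 n a u)) \<and>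
         (cycle_power n a u v \<longleftrightarrow> (ci_x1 n a u < ci_x2 n a v \<and> ci_x1 n a v < ci_x2 n a u) \<or>
          (ci_y1 n a u < ci_y2 n a v \<and> ci_y1 n a v < ci_y2 n a u))"
    unfolding cp_lt[OF uv(1)] ci_x1_def ci_x2_def ci_y1_def ci_y2_def
    using uv by auto
qed

definition d1_x1 :: "nat \<Rightarrow> nat \<Rightarrow> int" where
  "d1_x1 n v = (if odd n \<and> v = 0 then -6 else if even v then -2 else 2 * int v + 4)"
definition d1_x2 :: "nat \<Rightarrow> nat \<Rightarrow> int" where
  "d1_x2 n v = (if odd n \<and> v = 0 then -4 else if even v then 2 * int v else 2 * int v + 6)"
definition d1_y1 :: "nat \<Rightarrow> nat \<Rightarrow> int" where
  "d1_y1 n v = (if odd n then (if v = 0 then 5 else if even v then 2 * int v + 4 else -2)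
     else (if v = 0 then -6 else if even v then 2 * int v + 4 else if v = 1 \<or> v = n - 1 then -2 else -4))"
definition d1_y2 :: "nat \<Rightarrow> nat \<Rightarrow> int" where
  "d1_y2 n v = (if odd n then (if v = 0 then 2 * int n else if even v then 2 * int v + 6 else 2 * int v)
     else (if v = 0 then -3 else if even v then 2 * int v + 6 else 2 * int v))"

lemma d1_odd0: "odd n \<Longrightarrow> d1_x1 n 0 = -6 \<and> d1_x2 n 0 = -4 \<and> d1_y1 n 0 = 5 \<and> d1_y2 n 0 = 2 * int n"
  unfolding d1_x1_def d1_x2_def d1_y1_def d1_y2_def by simp
lemma d1_ev0: "even n \<Longrightarrow> d1_x1 n 0 = -2 \<and> d1_x2 n 0 = 0 \<and> d1_y1 n 0 = -6 \<and> d1_y2 n 0 = -3"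
  unfolding d1_x1_def d1_x2_def d1_y1_def d1_y2_def by simp
lemma d1_ev: "0 < p \<Longrightarrow> d1_x1 n (2*p) = -2 \<and> d1_x2 n (2*p) = 4 * int p \<and> d1_y1 n (2*p) = 4 * int p + 4 \<and> d1_y2 n (2*p) = 4 * int p + 6"
  unfolding d1_x1_def d1_x2_def d1_y1_def d1_y2_def by simp
lemma d1_od: "d1_x1 n (Suc (2*p)) = 4 * int p + 6 \<and> d1_x2 n (Suc (2*p)) = 4 * int p + 8 \<and> d1_y2 n (Suc (2*p)) = 4 * int p + 2 \<and>
   d1_y1 n (Suc (2*p)) = (if even n \<and> p \<noteq> 0 \<and> 2*p+2 \<noteq> n then -4 else -2)"
  unfolding d1_x1_def d1_x2_def d1_y1_def d1_y2_def by (auto; presburger)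

lemma cpc_lt': "u < v \<Longrightarrow> cycle_power_compl n a u v \<longleftrightarrow> (u + a < v \<and> v + a < n + u)"
  by (subst cpc_lt) auto

lemma part2:
  assumes n3: "n \<ge> 3"
  shows "TRVG {..<n} (cycle_power_compl n 1)"
proof (rule TRVG_intI[where XA = "d1_x1 n" and XB = "d1_x2 n" and YA = "d1_y1 n" and YB = "d1_y2 n"])
  fix v assume "v < n" then show "d1_x1 n v < d1_x2 n v \<and> d1_y1 n v < d1_y2 n v"
    unfolding d1_x1_def d1_x2_def d1_y1_def d1_y2_def using n3 by auto
next
  fix u v show "cycle_power_compl n 1 u v = cycle_power_compl n 1 v u" by (rule cpc_sym)
next
  fix u v assume uv: "u < v" "v < n"
  show "\<not> ((d1_x1 n u < d1_x2 n v \<and> d1_x1 n v < d1_x2 n u) \<and>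
          (d1_y1 n u < d1_y2 n v \<and> d1_y1 n v < d1_y2 n u)) \<and>
         (cycle_power_compl n 1 u v \<longleftrightarrow> (d1_x1 n u < d1_x2 n v \<and> d1_x1 n v < d1_x2 n u) \<or>
          (d1_y1 n u < d1_y2 n v \<and> d1_y1 n v < d1_y2 n u))"
  proof -
    have "\<exists>p. u = 2*p \<or> u = Suc (2*p)" by presburger
    then obtain p where pu: "u = 2*p \<or> u = Suc (2*p)" by blast
    have "\<exists>q. v = 2*q \<or> v = Suc (2*q)" by presburger
    then obtain q where qv: "v = 2*q \<or> v = Suc (2*q)" by blast
    have "\<exists>m. n = 2*m \<or> n = Suc (2*m)" by presburger
    then obtain m where mn: "n = 2*m \<or> n = Suc (2*m)" by blast
    show ?thesis
    proof (cases "u = 0")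
      case True
      then have "v = 2*q \<and> 0 < q \<or> v = Suc (2*q)" using qv uv by auto
      then show ?thesis unfolding cpc_lt'[OF uv(1)] using True mn uv n3
        by - (elim disjE conjE; auto simp add: d1_odd0 d1_ev0 d1_ev d1_od; presburger)
    next
      case False
      then have "u = 2*p \<and> 0 < p \<or> u = Suc (2*p)" using pu by auto
      moreover have "v = 2*q \<and> 0 < q \<or> v = Suc (2*q)" using qv uv by auto
      ultimately show ?thesis unfolding cpc_lt'[OF uv(1)] using mn uv n3
        by - (elim disjE conjE; auto simp add: d1_odd0 d1_ev0 d1_ev d1_od; presburger)
    qed
  qed
qed

definition d4_x1 :: "nat \<Rightarrow> nat \<Rightarrow> nat \<Rightarrow> int" where
  "d4_x1 n a i = (if n \<le> 2*a+1 then int i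
     else if n = 2*a+2 then (if i \<le> a then int i else int i - int a - 1)
     else 2 * (if i \<le> a then 2 * int i + 1 else 2 * (int i - int a - 1)))"
definition d4_x2 :: "nat \<Rightarrow> nat \<Rightarrow> nat \<Rightarrow> int" where
  "d4_x2 n a i = d4_x1 n a i + (if n \<le> 2*a+2 then 1 else 3)"
definition d4_y1 :: "nat \<Rightarrow> nat \<Rightarrow> nat \<Rightarrow> int" where
  "d4_y1 n a i = (if n \<le> 2*a+3 then (if n = 2*a+3 \<and> i = 2*a+2 then int a + 1 else int i)
     else if i + 2 \<le> a then 2 * int i
     else if i + 1 = a then 2 * int a
     else if i = a then 2 * int a + 6
     else if i = a + 1 then 2 * int a + 2
     else if i = a + 2 then 2 * int a + 5
     else if i \<le> 2*a+1 then 2 * (int i - int a - 3)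
     else if i = 2*a+2 then 2 * int a
     else 2 * int a + 4)"
definition d4_y2 :: "nat \<Rightarrow> nat \<Rightarrow> nat \<Rightarrow> int" where
  "d4_y2 n a i = (if n \<le> 2*a+3 then d4_y1 n a i + 1
     else if i + 2 \<le> a then 2 * int i + 1
     else if i + 1 = a then 2 * int a + 1
     else if i = a then 2 * int a + 7
     else if i = a + 1 then 2 * int a + 5
     else if i = a + 2 then 2 * int a + 6
     else if i \<le> 2*a+1 then 2 * (int i - int a - 3) + 1
     else if i = 2*a+2 then 2 * int a + 3
     else 2 * int a + 7)"


lemma d4_cat: "(i::nat) < 2*a+4 \<Longrightarrow> i + 2 \<le> a \<or> i + 1 = a \<or> i = a \<or> i = a + 1 \<or> i = a + 2 \<or>
   (a + 3 \<le> i \<and> i \<le> 2*a+1) \<or> i = 2*a+2 \<or> i = 2*a+3"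
  by auto

lemma part4:
  assumes a2: "a \<ge> 2" and n4: "n \<le> 2*a+4"
  shows "TRVG {..<n} (cycle_power_compl n a)"
proof (rule TRVG_intI[where XA = "d4_x1 n a" and XB = "d4_x2 n a" and YA = "d4_y1 n a" and YB = "d4_y2 n a"])
  fix v assume "v < n" then show "d4_x1 n a v < d4_x2 n a v \<and> d4_y1 n a v < d4_y2 n a v"
    unfolding d4_x2_def d4_y1_def d4_y2_def using a2 by auto
next
  fix u v show "cycle_power_compl n a u v = cycle_power_compl n a v u" by (rule cpc_sym)
next
  fix u v assume uv: "u < v" "v < n"
  show "\<not> ((d4_x1 n a u < d4_x2 n a v \<and> d4_x1 n a v < d4_x2 n a u) \<and>
          (d4_y1 n a u < d4_y2 n a v \<and> d4_y1 n a v < d4_y2 n a u)) \<and>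
         (cycle_power_compl n a u v \<longleftrightarrow> (d4_x1 n a u < d4_x2 n a v \<and> d4_x1 n a v < d4_x2 n a u) \<or>
          (d4_y1 n a u < d4_y2 n a v \<and> d4_y1 n a v < d4_y2 n a u))"
  proof (cases "n \<le> 2*a+1")
    case True then show ?thesis unfolding cpc_lt'[OF uv(1)] d4_x1_def d4_x2_def d4_y1_def d4_y2_def
      using uv by auto
  next
    case f1: False
    show ?thesis
    proof (cases "n = 2*a+2")
      case True then show ?thesis unfolding cpc_lt'[OF uv(1)] d4_x1_def d4_x2_def d4_y1_def d4_y2_def
        using uv by auto
    next
      case f2: False
      show ?thesis
      proof (cases "n = 2*a+3")
        case True then show ?thesis unfolding cpc_lt'[OF uv(1)] d4_x1_def d4_x2_def d4_y1_def d4_y2_def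
          using uv by auto
      next
        case False
        then have n: "n = 2*a+4" using f1 f2 n4 by auto
        have cu: "u + 2 \<le> a \<or> u + 1 = a \<or> u = a \<or> u = a + 1 \<or> u = a + 2 \<or>
          (a + 3 \<le> u \<and> u \<le> 2*a+1) \<or> u = 2*a+2 \<or> u = 2*a+3" using d4_cat[of u a] uv n by auto
        have cv: "v + 2 \<le> a \<or> v + 1 = a \<or> v = a \<or> v = a + 1 \<or> v = a + 2 \<or>
          (a + 3 \<le> v \<and> v \<le> 2*a+1) \<or> v = 2*a+2 \<or> v = 2*a+3" using d4_cat[of v a] uv n by auto
        show ?thesis unfolding cpc_lt'[OF uv(1)] d4_x1_def d4_x2_def d4_y1_def d4_y2_def
          using cu cv uv n a2 by - (elim disjE conjE; auto; arith)
      qed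
    qed
  qed
qed

theorem theorem6:
  fixes n a :: nat
  assumes "n \<ge> 3" and "a \<ge> 1"
  shows "TRVG {..<n} (cycle_power n a)
    \<and> TRVG {..<n} (cycle_power_compl n 1)
    \<and> (a \<ge> 3 \<and> n \<ge> 2 * a + 8 \<longrightarrow> \<not> TRVG {..<n} (cycle_power_compl n a))
    \<and> (a \<ge> 2 \<and> n \<le> 2 * a + 4 \<longrightarrow> TRVG {..<n} (cycle_power_compl n a))"
  using part1[of n a] part2[OF assms(1)] part3[of a n] part4[of a n] by blast

end
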